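(* Let $X_1,X_2,\dots$ be i.i.d. from a finite mixture $P=\sum_{j=1}^tp_jR_j$ with $t\in\mathbb{N}$, distinct probability measures $R_j$ and weights $p_j\in(0,1)$ summing to one, and let $P^{(\infty)}$ be their joint law. Consider the Dirichlet process mixture model with prior $\pi$ on the concentration parameter satisfying A1 and A2. If $\mathrm{pr}(K_n=t\mid X_{1:n})\to1$ in $P^{(\infty)}$-probability, then the posterior distribution $\pi(\alpha\mid X_{1:n})$ of the concentration parameter converges weakly to $\delta_0$, in $P^{(\infty)}$-probability, as $n\to\infty$.
   Context: Model: given a kernel density $k(\cdot\mid\theta)$ and a base probability measure $Q_0$ with density $q_0$: $\alpha\sim\pi$, $\tilde P\mid\alpha\sim\mathrm{DP}(\alpha,Q_0)$, $\theta_i\mid\tilde P$ i.i.d. $\tilde P$, $X_i\mid\theta_i\sim k(\cdot\mid\theta_i)$ independently. $K_n$ is the number of distinct values among $\theta_1,\dots,\theta_n$; $\mathrm{pr}(\cdot\mid X_{1:n})$ and $\pi(\alpha\mid X_{1:n})$ denote posteriors under this model. Explicitly, with $\tau_s(n)$ the partitions of $\{1,\dots,n\}$ into $s$ nonempty blocks, $a_j=|A_j|$, $\alpha^{(n)}=\alpha(\alpha+1)\cdots(\alpha+n-1)$, $m(x_B)=\int\prod_{i\in B}k(x_i\mid\theta)q_0(\theta)d\theta$: $\pi(d\alpha\mid X_{1:n})\propto\pi(d\alpha)\sum_{s=1}^n\frac{\alpha^s}{\alpha^{(n)}}\sum_{A\in\tau_s(n)}\prod_j(a_j-1)!\,m(X_{A_j})$.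 (A1) $\pi$ has a Lebesgue density, also denoted $\pi$; (A2) there exist $\epsilon,\delta,\beta$ with $\frac1\delta\alpha^\beta\le\pi(\alpha)\le\delta\alpha^\beta$ for all $\alpha\in(0,\epsilon)$. *)

theory Defs
  imports "HOL-Probability.Probability" "HOL-Library.Disjoint_Sets"
begin

text \<open>Data indices are 0,...,n-1 (i.e. X_{1:n} is x 0, ..., x (n-1)).
  The kernel is k x th = k(x | th); the base measure Q0 has density q0
  with respect to a dominating measure mu on the parameter space.\<close>

definition tau :: "nat \<Rightarrow> nat \<Rightarrow> nat set set set" where
  "tau s n = {P. partition_on {..<n} P \<and> card P = s}"

definition marg :: "('a \<Rightarrow> 'b \<Rightarrow> real) \<Rightarrow> 'b measure \<Rightarrow> ('b \<Rightarrow> real)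
    \<Rightarrow> (nat \<Rightarrow> 'a) \<Rightarrow> nat set \<Rightarrow> real" where
  "marg k mu q0 x B = (\<integral>th. (\<Prod>i\<in>B. k (x i) th) * q0 th \<partial>mu)"

text \<open>Unnormalised joint posterior weight of (alpha, K_n = s):
  alpha^s / alpha^(n) * sum over partitions with s blocks.\<close>
definition likK :: "('a \<Rightarrow> 'b \<Rightarrow> real) \<Rightarrow> 'b measure \<Rightarrow> ('b \<Rightarrow> real)
    \<Rightarrow> nat \<Rightarrow> (nat \<Rightarrow> 'a) \<Rightarrow> nat \<Rightarrow> real \<Rightarrow> real" where
  "likK k mu q0 n x s \<alpha> = \<alpha> ^ s / pochhammer \<alpha> n *
     (\<Sum>A\<in>tau s n. \<Prod>B\<in>A. fact (card B - 1) * marg k mu q0 x B)"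

definition lik :: "('a \<Rightarrow> 'b \<Rightarrow> real) \<Rightarrow> 'b measure \<Rightarrow> ('b \<Rightarrow> real)
    \<Rightarrow> nat \<Rightarrow> (nat \<Rightarrow> 'a) \<Rightarrow> real \<Rightarrow> real" where
  "lik k mu q0 n x \<alpha> = (\<Sum>s=1..n. likK k mu q0 n x s \<alpha>)"

definition evidence :: "(real \<Rightarrow> real) \<Rightarrow> ('a \<Rightarrow> 'b \<Rightarrow> real) \<Rightarrow> 'b measure
    \<Rightarrow> ('b \<Rightarrow> real) \<Rightarrow> nat \<Rightarrow> (nat \<Rightarrow> 'a) \<Rightarrow> real" where
  "evidence pri k mu q0 n x =
     (LINT \<alpha>:{0<..}|lborel. pri \<alpha> * lik k mu q0 n x \<alpha>)"

definition postK :: "(real \<Rightarrow> real) \<Rightarrow> ('a \<Rightarrow> 'b \<Rightarrow> real) \<Rightarrow> 'b measure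
    \<Rightarrow> ('b \<Rightarrow> real) \<Rightarrow> nat \<Rightarrow> (nat \<Rightarrow> 'a) \<Rightarrow> nat \<Rightarrow> real" where
  "postK pri k mu q0 n x s =
     (LINT \<alpha>:{0<..}|lborel. pri \<alpha> * likK k mu q0 n x s \<alpha>) / evidence pri k mu q0 n x"

definition post_alpha :: "(real \<Rightarrow> real) \<Rightarrow> ('a \<Rightarrow> 'b \<Rightarrow> real) \<Rightarrow> 'b measure
    \<Rightarrow> ('b \<Rightarrow> real) \<Rightarrow> nat \<Rightarrow> (nat \<Rightarrow> 'a) \<Rightarrow> real measure" where
  "post_alpha pri k mu q0 n x = density lborel
     (\<lambda>\<alpha>. ennreal (indicator {0<..} \<alpha> * pri \<alpha> * lik k mu q0 n x \<alpha>
                      / evidence pri k mu q0 n x))"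

definition mixture :: "'a measure \<Rightarrow> nat \<Rightarrow> (nat \<Rightarrow> real) \<Rightarrow> (nat \<Rightarrow> 'a measure) \<Rightarrow> 'a measure" where
  "mixture nu t p R = measure_of (space nu) (sets nu)
     (\<lambda>A. \<Sum>j<t. ennreal (p j) * emeasure (R j) A)"

definition tendsto_in_prob :: "'w measure \<Rightarrow> (nat \<Rightarrow> 'w \<Rightarrow> real) \<Rightarrow> real \<Rightarrow> bool" where
  "tendsto_in_prob M Y c \<longleftrightarrow>
     (\<forall>e>0. (\<lambda>n. measure M {\<omega>\<in>space M. e < \<bar>Y n \<omega> - c\<bar>}) \<longlonglongrightarrow> 0)"

definition weak_conv_delta0_in_prob :: "'w measure \<Rightarrow> (nat \<Rightarrow> 'w \<Rightarrow> real measure) \<Rightarrow> bool" where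
  "weak_conv_delta0_in_prob M Q \<longleftrightarrow>
     (\<forall>f::real \<Rightarrow> real. continuous_on UNIV f \<and> bounded (range f) \<longrightarrow>
        tendsto_in_prob M (\<lambda>n \<omega>. \<integral>\<alpha>. f \<alpha> \<partial>(Q n \<omega>)) (f 0))"

end

theory Submission
  imports Defs
begin


definition rr :: "nat \<Rightarrow> nat \<Rightarrow> real \<Rightarrow> real" where
  "rr n s \<alpha> = \<alpha> ^ s / pochhammer \<alpha> n"

lemma rr_meas[measurable]: "rr n s \<in> borel_measurable borel"
  unfolding rr_def[abs_def] pochhammer_prod by measurable

lemma poch_mono: "0 \<le> x \<Longrightarrow> x \<le> y \<Longrightarrow> pochhammer x m \<le> pochhammer (y::real) m"
  unfolding pochhammer_prod by (intro prod_mono) auto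

lemma poch_pos: "0 < x \<Longrightarrow> 0 < pochhammer (x::real) m"
  unfolding pochhammer_prod by (intro prod_pos) auto

lemma poch_ge1: "1 \<le> x \<Longrightarrow> 1 \<le> pochhammer (x::real) m"
  unfolding pochhammer_prod by (intro prod_ge_1) auto

lemma pow_le_poch: "0 \<le> x \<Longrightarrow> x ^ m \<le> pochhammer (x::real) m"
proof -
  assume "0 \<le> x"
  have "x ^ m = (\<Prod>i\<in>{0..<m}. x)" by simp
  also have "\<dots> \<le> pochhammer x m" unfolding pochhammer_prod
    using \<open>0 \<le> x\<close> by (intro prod_mono) auto
  finally show ?thesis .
qed

lemma rr_nonneg: "0 < \<alpha> \<Longrightarrow> 0 \<le> rr n s \<alpha>"
  unfolding rr_def using poch_pos[of \<alpha> n] by simp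

lemma rr_le1: assumes "1 \<le> s" "s \<le> n" "0 < \<alpha>" shows "rr n s \<alpha> \<le> 1"
proof -
  have e: "pochhammer \<alpha> n = pochhammer \<alpha> s * pochhammer (\<alpha> + of_nat s) (n - s)"
    using pochhammer_product'[of \<alpha> s "n-s"] assms by simp
  have a: "\<alpha> ^ s \<le> pochhammer \<alpha> s" using pow_le_poch assms by simp
  have b: "1 \<le> pochhammer (\<alpha> + of_nat s) (n - s)"
    using assms by (intro poch_ge1) auto
  have p: "0 < pochhammer \<alpha> s" using poch_pos assms by auto
  have "\<alpha> ^ s \<le> pochhammer \<alpha> s * pochhammer (\<alpha> + of_nat s) (n - s)"
    using a b p by (metis mult_le_cancel_left1 order_trans less_le_not_le)
  then show ?thesis unfolding rr_def e using p b by (simp add: divide_le_eq)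
qed

lemma rr_upper: assumes "t \<le> n" "0 < \<eta>" "\<eta> \<le> \<alpha>"
  shows "rr n t \<alpha> \<le> 1 / pochhammer (\<eta> + of_nat t) (n - t)"
proof -
  have e: "pochhammer \<alpha> n = pochhammer \<alpha> t * pochhammer (\<alpha> + of_nat t) (n - t)"
    using pochhammer_product'[of \<alpha> t "n-t"] assms by simp
  have a: "\<alpha> ^ t \<le> pochhammer \<alpha> t" using pow_le_poch assms by simp
  have p: "0 < pochhammer \<alpha> t" using poch_pos assms by auto
  have q: "0 < pochhammer (\<eta> + of_nat t) (n - t)" using poch_pos assms by auto
  have m: "pochhammer (\<eta> + of_nat t) (n - t) \<le> pochhammer (\<alpha> + of_nat t) (n - t)"
    using assms by (intro poch_mono) auto
  have "rr n t \<alpha> = (\<alpha> ^ t / pochhammer \<alpha> t) / pochhammer (\<alpha> + of_nat t) (n - t)"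
    unfolding rr_def e by simp
  also have "\<dots> \<le> 1 / pochhammer (\<alpha> + of_nat t) (n - t)"
    using a p q m by (intro divide_right_mono) (auto simp: divide_le_eq)
  also have "\<dots> \<le> 1 / pochhammer (\<eta> + of_nat t) (n - t)"
    using q m by (intro divide_left_mono) auto
  finally show ?thesis .
qed

lemma rr_lower: assumes "1 \<le> t" "t \<le> n" "0 < \<alpha>" "\<alpha> \<le> a"
  shows "\<alpha> ^ (t - 1) / pochhammer (a + 1) (n - 1) \<le> rr n t \<alpha>"
proof -
  have e: "pochhammer \<alpha> n = \<alpha> * pochhammer (\<alpha> + 1) (n - 1)"
    using pochhammer_rec[of \<alpha> "n-1"] assms by simp
  have e2: "\<alpha> ^ t = \<alpha> * \<alpha> ^ (t - 1)" using assms
    by (metis Suc_diff_1 less_le_trans zero_less_one power_Suc)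
  have q: "0 < pochhammer (\<alpha> + 1) (n - 1)" using poch_pos assms by auto
  have m: "pochhammer (\<alpha> + 1) (n - 1) \<le> pochhammer (a + 1) (n - 1)"
    using assms by (intro poch_mono) auto
  have "rr n t \<alpha> = \<alpha> ^ (t - 1) / pochhammer (\<alpha> + 1) (n - 1)"
    unfolding rr_def e e2 using assms by simp
  then show ?thesis using q m assms by (simp add: frac_le)
qed



lemma harm_alt: "(\<Sum>j<m. 1 / (real j + 1)) = harm m"
  by (induction m) (auto simp: harm_Suc harm_def field_simps)

lemma exp_neg_harm: fixes c :: real assumes "0 < c" shows "(\<lambda>m. exp (- (c * harm m))) \<longlonglongrightarrow> 0"
proof -
  have "filterlim (\<lambda>m. c * harm m) at_top sequentially"
    by (rule filterlim_tendsto_pos_mult_at_top[OF tendsto_const assms harm_at_top])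
  then have "filterlim (\<lambda>m. - (c * harm m)) at_bot sequentially"
    by (simp add: filterlim_uminus_at_top)
  then show ?thesis by (rule filterlim_compose[OF exp_at_bot])
qed

lemma poch_ratio_lim: fixes a b :: real assumes "0 < a" "a < b"
  shows "(\<lambda>m. pochhammer a m / pochhammer b m) \<longlonglongrightarrow> 0"
proof -
  define c where "c = (b - a) / (b + 1)"
  have c: "0 < c" using assms by (simp add: c_def)
  have ub: "pochhammer a m / pochhammer b m \<le> exp (- (c * harm m))" for m
  proof -
    have "pochhammer a m / pochhammer b m = (\<Prod>j<m. (a + real j) / (b + real j))"
      unfolding pochhammer_prod prod_dividef by (simp add: atLeast0LessThan)
    also have "\<dots> \<le> (\<Prod>j<m. exp (- ((b - a) / (b + real j))))"
    proof (intro prod_mono conjI)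
      fix j assume "j \<in> {..<m}"
      have "(a + real j) / (b + real j) = 1 + (- ((b - a) / (b + real j)))"
        using assms by (simp add: field_simps)
      also have "\<dots> \<le> exp (- ((b - a) / (b + real j)))" by (rule exp_ge_add_one_self)
      finally show "(a + real j) / (b + real j) \<le> exp (- ((b - a) / (b + real j)))" .
      show "0 \<le> (a + real j) / (b + real j)" using assms by simp
    qed
    also have "\<dots> = exp (- (\<Sum>j<m. (b - a) / (b + real j)))"
      by (simp add: exp_sum[symmetric] sum_negf)
    also have "\<dots> \<le> exp (- (c * harm m))"
    proof -
      have "c * harm m = (\<Sum>j<m. c * (1 / (real j + 1)))"
        by (simp add: harm_alt[symmetric] sum_distrib_left)
      also have "\<dots> \<le> (\<Sum>j<m. (b - a) / (b + real j))"
      proof (intro sum_mono)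
        fix j assume "j \<in> {..<m}"
        have "b + real j \<le> (b + 1) * (real j + 1)" using assms by (simp add: algebra_simps)
        have "c * (1 / (real j + 1)) = (b - a) / ((b + 1) * (real j + 1))"
          by (simp add: c_def)
        also have "\<dots> \<le> (b - a) / (b + real j)"
          by (rule divide_left_mono) (use assms \<open>b + real j \<le> _\<close> in auto)
        finally show "c * (1 / (real j + 1)) \<le> (b - a) / (b + real j)" .
      qed
      finally show ?thesis by simp
    qed
    finally show ?thesis .
  qed
  have lb: "0 \<le> pochhammer a m / pochhammer b m" for m
    using assms by (simp add: pochhammer_prod prod_nonneg)
  show ?thesis
    by (rule tendsto_sandwich[OF _ _ tendsto_const exp_neg_harm[OF c]])
       (use lb ub in auto)
qed


locale prisetup =
  fixes pri :: "real \<Rightarrow> real"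
  assumes pri_meas[measurable]: "pri \<in> borel_measurable borel"
  and pri_nonneg: "\<And>\<alpha>. 0 < \<alpha> \<Longrightarrow> 0 \<le> pri \<alpha>"
  and pri_int: "set_integrable lborel {0<..} pri"
  and pri_one: "(LINT \<alpha>:{0<..}|lborel. pri \<alpha>) = 1"
begin

definition PI :: "(real \<Rightarrow> real) \<Rightarrow> real" where
  "PI g = (\<integral>\<alpha>. indicator {0<..} \<alpha> * (pri \<alpha> * g \<alpha>) \<partial>lborel)"

definition bm :: "(real \<Rightarrow> real) \<Rightarrow> bool" where
  "bm g \<longleftrightarrow> g \<in> borel_measurable borel \<and> (\<exists>K. \<forall>\<alpha>>0. \<bar>g \<alpha>\<bar> \<le> K)"

lemma PI_set: "(LINT \<alpha>:{0<..}|lborel. pri \<alpha> * g \<alpha>) = PI g"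
  unfolding PI_def set_lebesgue_integral_def by simp

lemma PI_int: assumes "bm g" shows "integrable lborel (\<lambda>\<alpha>. indicator {0<..} \<alpha> * (pri \<alpha> * g \<alpha>))"
proof -
  obtain K where g[measurable]: "g \<in> borel_measurable borel" and K: "\<And>\<alpha>. \<alpha>>0 \<Longrightarrow> \<bar>g \<alpha>\<bar> \<le> K"
    using assms by (auto simp: bm_def)
  have K0: "0 \<le> K" using K[of 1] by auto
  have i: "integrable lborel (\<lambda>\<alpha>. K * (indicator {0<..} \<alpha> * pri \<alpha>))"
    using pri_int unfolding set_integrable_def by simp
  show ?thesis
  proof (rule Bochner_Integration.integrable_bound[OF i])
    show "(\<lambda>\<alpha>. indicator {0<..} \<alpha> * (pri \<alpha> * g \<alpha>)) \<in> borel_measurable lborel" by simp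
    have "\<bar>indicator {0<..} \<alpha> * (pri \<alpha> * g \<alpha>)\<bar> \<le> \<bar>K * (indicator {0<..} \<alpha> * pri \<alpha>)\<bar>" for \<alpha> :: real
    proof (cases "0 < \<alpha>")
      case True
      have "\<bar>pri \<alpha> * g \<alpha>\<bar> = pri \<alpha> * \<bar>g \<alpha>\<bar>" using pri_nonneg[OF True] by (simp add: abs_mult)
      also have "\<dots> \<le> pri \<alpha> * K" using K[OF True] pri_nonneg[OF True] by (rule mult_left_mono)
      finally show ?thesis using True K0 pri_nonneg[OF True] by (simp add: abs_mult mult.commute)
    qed simp
    then show "AE \<alpha> in lborel. norm (indicator {0<..} \<alpha> * (pri \<alpha> * g \<alpha>)) \<le> norm (K * (indicator {0<..} \<alpha> * pri \<alpha>))"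
      by simp
  qed
qed

lemma bm_const[simp]: "bm (\<lambda>_. c)"
  unfolding bm_def by auto

lemma bm_add: assumes "bm g" "bm h" shows "bm (\<lambda>\<alpha>. g \<alpha> + h \<alpha>)"
proof -
  obtain K L where [measurable]: "g \<in> borel_measurable borel" "h \<in> borel_measurable borel"
    and K: "\<forall>\<alpha>>0. \<bar>g \<alpha>\<bar> \<le> K" and L: "\<forall>\<alpha>>0. \<bar>h \<alpha>\<bar> \<le> L"
    using assms unfolding bm_def by blast
  have "\<forall>\<alpha>>0. \<bar>g \<alpha> + h \<alpha>\<bar> \<le> K + L"
    using K L by (auto intro: order_trans[OF abs_triangle_ineq] add_mono)
  then show ?thesis unfolding bm_def by (auto simp del: abs_le_iff)
qed

lemma bm_mult: assumes "bm g" "bm h" shows "bm (\<lambda>\<alpha>. g \<alpha> * h \<alpha>)"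
proof -
  obtain K L where [measurable]: "g \<in> borel_measurable borel" "h \<in> borel_measurable borel"
    and K: "\<forall>\<alpha>>0. \<bar>g \<alpha>\<bar> \<le> K" and L: "\<forall>\<alpha>>0. \<bar>h \<alpha>\<bar> \<le> L"
    using assms unfolding bm_def by blast
  have "\<forall>\<alpha>>0. \<bar>g \<alpha> * h \<alpha>\<bar> \<le> K * L"
  proof (intro allI impI)
    fix \<alpha> :: real assume "0 < \<alpha>"
    then show "\<bar>g \<alpha> * h \<alpha>\<bar> \<le> K * L"
      using K L unfolding abs_mult by (intro mult_mono) (auto intro: order_trans[OF abs_ge_zero])
  qed
  then show ?thesis unfolding bm_def by (auto simp del: abs_le_iff)
qed

lemma bm_sum: "finite S \<Longrightarrow> (\<And>s. s \<in> S \<Longrightarrow> bm (g s)) \<Longrightarrow> bm (\<lambda>\<alpha>. \<Sum>s\<in>S. g s \<alpha>)"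
  by (induction S rule: finite_induct) (auto intro: bm_add)

lemma bm_rr: "1 \<le> s \<Longrightarrow> s \<le> n \<Longrightarrow> bm (rr n s)"
  unfolding bm_def using rr_le1 rr_nonneg by (auto intro!: exI[of _ 1])

lemma bm_cont: "continuous_on UNIV f \<Longrightarrow> (\<And>x. \<bar>f x\<bar> \<le> B) \<Longrightarrow> bm f"
  unfolding bm_def using borel_measurable_continuous_onI by auto

lemma PI_add: assumes "bm g" "bm h" shows "PI (\<lambda>\<alpha>. g \<alpha> + h \<alpha>) = PI g + PI h"
proof -
  have eq: "(\<lambda>\<alpha>. indicator {0<..} \<alpha> * (pri \<alpha> * (g \<alpha> + h \<alpha>))) =
     (\<lambda>\<alpha>. indicator {0<..} \<alpha> * (pri \<alpha> * g \<alpha>) + indicator {0<..} \<alpha> * (pri \<alpha> * h \<alpha>))"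
    by (rule ext) (simp add: algebra_simps)
  show ?thesis unfolding PI_def eq by (rule Bochner_Integration.integral_add[OF PI_int[OF assms(1)] PI_int[OF assms(2)]])
qed

lemma PI_cmult: "PI (\<lambda>\<alpha>. c * g \<alpha>) = c * PI g"
proof -
  have eq: "(\<lambda>\<alpha>. indicator {0<..} \<alpha> * (pri \<alpha> * (c * g \<alpha>))) =
     (\<lambda>\<alpha>. c * (indicator {0<..} \<alpha> * (pri \<alpha> * g \<alpha>)))"
    by (rule ext) (simp add: algebra_simps)
  show ?thesis unfolding PI_def eq by (rule integral_mult_right_zero)
qed

lemma PI_diff: assumes "bm g" "bm h" shows "PI (\<lambda>\<alpha>. g \<alpha> - h \<alpha>) = PI g - PI h"
proof -
  have eq: "(\<lambda>\<alpha>. indicator {0<..} \<alpha> * (pri \<alpha> * (g \<alpha> - h \<alpha>))) =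
     (\<lambda>\<alpha>. indicator {0<..} \<alpha> * (pri \<alpha> * g \<alpha>) - indicator {0<..} \<alpha> * (pri \<alpha> * h \<alpha>))"
    by (rule ext) (simp add: algebra_simps)
  show ?thesis unfolding PI_def eq by (rule Bochner_Integration.integral_diff[OF PI_int[OF assms(1)] PI_int[OF assms(2)]])
qed

lemma PI_sum: "finite S \<Longrightarrow> (\<And>s. s \<in> S \<Longrightarrow> bm (g s)) \<Longrightarrow> PI (\<lambda>\<alpha>. \<Sum>s\<in>S. g s \<alpha>) = (\<Sum>s\<in>S. PI (g s))"
proof (induction S rule: finite_induct)
  case empty then show ?case by (simp add: PI_def)
next
  case (insert x F)
  then show ?case by (simp add: PI_add bm_sum)
qed

lemma PI_mono: assumes "bm g" "bm h" "\<And>\<alpha>. 0 < \<alpha> \<Longrightarrow> g \<alpha> \<le> h \<alpha>" shows "PI g \<le> PI h"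
  unfolding PI_def
proof (rule integral_mono[OF PI_int[OF assms(1)] PI_int[OF assms(2)]])
  fix \<alpha> :: real show "indicator {0<..} \<alpha> * (pri \<alpha> * g \<alpha>) \<le> indicator {0<..} \<alpha> * (pri \<alpha> * h \<alpha>)"
    using assms(3)[of \<alpha>] pri_nonneg[of \<alpha>] by (cases "0 < \<alpha>") (auto intro: mult_left_mono)
qed

lemma PI_nonneg: assumes "\<And>\<alpha>. 0 < \<alpha> \<Longrightarrow> 0 \<le> g \<alpha>" shows "0 \<le> PI g"
  unfolding PI_def
  by (rule integral_nonneg_AE, rule AE_I2) (use assms pri_nonneg in \<open>auto simp: indicator_def\<close>)

lemma PI_abs: assumes "bm g" shows "\<bar>PI g\<bar> \<le> PI (\<lambda>\<alpha>. \<bar>g \<alpha>\<bar>)"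
proof -
  have b: "bm (\<lambda>\<alpha>. \<bar>g \<alpha>\<bar>)" using assms unfolding bm_def by auto
  show ?thesis unfolding PI_def
    by (rule integral_abs_bound_integral[OF PI_int[OF assms] PI_int[OF b]])
       (use pri_nonneg in \<open>auto simp: indicator_def abs_mult\<close>)
qed

lemma PI_one: "PI (\<lambda>_. 1) = 1"
  using pri_one PI_set[of "\<lambda>_. 1"] by simp

end


context prisetup begin

lemma det:
  fixes f :: "real \<Rightarrow> real"
  assumes e0: "0 < \<epsilon>0" and d0: "0 < \<delta>"
    and A2: "\<forall>\<alpha>\<in>{0<..<\<epsilon>0}. \<alpha> powr \<beta> / \<delta> \<le> pri \<alpha>"
    and fc: "continuous_on UNIV f" and fB: "\<And>x. \<bar>f x\<bar> \<le> B1" and B1: "0 < B1"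
    and t: "1 \<le> t"
  shows "(\<lambda>n. \<bar>PI (\<lambda>\<alpha>. rr n t \<alpha> * f \<alpha>) - f 0 * PI (rr n t)\<bar> / PI (rr n t)) \<longlonglongrightarrow> 0"
proof (rule LIMSEQ_I)
  fix e :: real assume e: "0 < e"
  obtain \<eta> where \<eta>: "0 < \<eta>" and \<eta>f: "\<And>\<alpha>. dist \<alpha> 0 < \<eta> \<Longrightarrow> dist (f \<alpha>) (f 0) < e / 2"
    using fc e unfolding continuous_on_iff by (metis UNIV_I half_gt_zero)
  define a where "a = min (min \<eta> \<epsilon>0 / 2) (1/2)"
  have a0: "0 < a" and a\<eta>: "a < \<eta>" and ae: "a < \<epsilon>0" and a1: "a < 1"
    using \<eta> e0 by (auto simp: a_def)
  define g0 where "g0 \<alpha> = indicator {0<..<a} \<alpha> * \<alpha> ^ (t - 1)" for \<alpha> :: real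
  have g0_bm: "bm g0"
  proof -
    have "\<bar>g0 \<alpha>\<bar> \<le> 1" if "0 < \<alpha>" for \<alpha>
      using that a1 by (auto simp: g0_def indicator_def intro!: power_le_one)
    then show ?thesis unfolding bm_def g0_def by (auto intro!: exI[of _ 1])
  qed
  define C where "C = PI g0"
  have Cpos: "0 < C"
  proof -
    have C0: "0 \<le> C" unfolding C_def by (rule PI_nonneg) (auto simp: g0_def indicator_def)
    have "C \<noteq> 0"
    proof
      assume "C = 0"
      then have ae0: "AE \<alpha> in lborel. indicator {0<..} \<alpha> * (pri \<alpha> * g0 \<alpha>) = 0"
        unfolding C_def PI_def
        by (subst (asm) integral_nonneg_eq_0_iff_AE[OF PI_int[OF g0_bm]])
           (auto intro!: AE_I2 mult_nonneg_nonneg pri_nonneg simp: indicator_def g0_def)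
      have nz: "indicator {0<..} \<alpha> * (pri \<alpha> * g0 \<alpha>) \<noteq> 0" if "\<alpha> \<in> {0<..<a}" for \<alpha>
      proof -
        have "0 < \<alpha> powr \<beta> / \<delta>" using that d0 by auto
        also have "\<dots> \<le> pri \<alpha>" using A2 that ae by auto
        finally show ?thesis using that by (auto simp: g0_def)
      qed
      have "AE \<alpha> in lborel. \<alpha> \<notin> {0<..<a}"
        using ae0 by eventually_elim (use nz in blast)
      then have "emeasure lborel {0<..<a} = 0"
        by (subst (asm) AE_iff_measurable[of "{0<..<a}"]) auto
      then show False using a0 by simp
    qed
    then show ?thesis using C0 by simp
  qed
  define K0 where "K0 = pochhammer (a + 1) (t - 1)"
  have K0: "0 < K0" unfolding K0_def using a0 by (intro poch_pos) auto
  define Q where "Q m = pochhammer (a + of_nat t) m / pochhammer (\<eta> + of_nat t) m" for m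
  have "Q \<longlonglongrightarrow> 0" unfolding Q_def[abs_def] by (rule poch_ratio_lim) (use a0 a\<eta> in auto)
  then obtain M0 where M0: "\<And>m. m \<ge> M0 \<Longrightarrow> norm (Q m - 0) < e * C / (4 * B1 * K0)"
    using LIMSEQ_D[of Q 0 "e * C / (4 * B1 * K0)"] e Cpos B1 K0 by auto
  show "\<exists>no. \<forall>n\<ge>no. norm (\<bar>PI (\<lambda>\<alpha>. rr n t \<alpha> * f \<alpha>) - f 0 * PI (rr n t)\<bar> / PI (rr n t) - 0) < e"
  proof (intro exI allI impI)
    fix n assume n: "M0 + t \<le> n"
    then have tn: "t \<le> n" and nt: "M0 \<le> n - t" by auto
    define I where "I = PI (rr n t)"
    define P1 where "P1 = pochhammer (a + 1) (n - 1)"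
    define P2 where "P2 = pochhammer (\<eta> + of_nat t) (n - t)"
    have P1: "0 < P1" unfolding P1_def using a0 by (intro poch_pos) auto
    have P2: "0 < P2" unfolding P2_def using \<eta> by (intro poch_pos) auto
    have rbm: "bm (rr n t)" using t tn by (rule bm_rr)
    have fbm: "bm f" using fc fB by (rule bm_cont)
    have IC: "C / P1 \<le> I"
    proof -
      have "C / P1 = PI (\<lambda>\<alpha>. inverse P1 * g0 \<alpha>)" unfolding C_def PI_cmult by (simp add: field_simps)
      also have "\<dots> \<le> I" unfolding I_def
      proof (rule PI_mono[OF bm_mult[OF bm_const g0_bm] rbm])
        fix \<alpha> :: real assume \<alpha>: "0 < \<alpha>"
        show "inverse P1 * g0 \<alpha> \<le> rr n t \<alpha>"
        proof (cases "\<alpha> < a")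
          case True
          then show ?thesis using rr_lower[OF t tn \<alpha>, of a] \<alpha>
            by (simp add: g0_def P1_def field_simps)
        next
          case False
          then show ?thesis using rr_nonneg[OF \<alpha>] by (simp add: g0_def)
        qed
      qed
      finally show ?thesis .
    qed
    have Ipos: "0 < I" using IC Cpos P1 by (meson divide_pos_pos less_le_trans)
    have JI: "\<bar>PI (\<lambda>\<alpha>. rr n t \<alpha> * f \<alpha>) - f 0 * I\<bar> \<le> e / 2 * I + 2 * B1 / P2"
    proof -
      have b1: "bm (\<lambda>\<alpha>. rr n t \<alpha> * f \<alpha>)" by (rule bm_mult[OF rbm fbm])
      have b2: "bm (\<lambda>\<alpha>. rr n t \<alpha> * (f \<alpha> - f 0))" using bm_mult[OF rbm bm_add[OF fbm bm_const[of "- f 0"]]] by simp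
      have "PI (\<lambda>\<alpha>. rr n t \<alpha> * f \<alpha>) - f 0 * I = PI (\<lambda>\<alpha>. rr n t \<alpha> * f \<alpha> - f 0 * rr n t \<alpha>)"
        unfolding I_def by (subst PI_diff[OF b1 bm_mult[OF bm_const rbm]]) (simp add: PI_cmult)
      also have "\<dots> = PI (\<lambda>\<alpha>. rr n t \<alpha> * (f \<alpha> - f 0))" by (simp add: algebra_simps)
      finally have eq: "PI (\<lambda>\<alpha>. rr n t \<alpha> * f \<alpha>) - f 0 * I = PI (\<lambda>\<alpha>. rr n t \<alpha> * (f \<alpha> - f 0))" .
      have "\<bar>PI (\<lambda>\<alpha>. rr n t \<alpha> * (f \<alpha> - f 0))\<bar> \<le> PI (\<lambda>\<alpha>. \<bar>rr n t \<alpha> * (f \<alpha> - f 0)\<bar>)"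
        by (rule PI_abs[OF b2])
      also have "\<dots> \<le> PI (\<lambda>\<alpha>. e / 2 * rr n t \<alpha> + 2 * B1 / P2)"
      proof (rule PI_mono)
        show "bm (\<lambda>\<alpha>. \<bar>rr n t \<alpha> * (f \<alpha> - f 0)\<bar>)" using b2 unfolding bm_def by auto
        show "bm (\<lambda>\<alpha>. e / 2 * rr n t \<alpha> + 2 * B1 / P2)" by (intro bm_add bm_mult bm_const rbm)
        fix \<alpha> :: real assume \<alpha>: "0 < \<alpha>"
        have r0: "0 \<le> rr n t \<alpha>" by (rule rr_nonneg[OF \<alpha>])
        have fd: "\<bar>f \<alpha> - f 0\<bar> \<le> 2 * B1" using fB[of \<alpha>] fB[of 0] by linarith
        show "\<bar>rr n t \<alpha> * (f \<alpha> - f 0)\<bar> \<le> e / 2 * rr n t \<alpha> + 2 * B1 / P2"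
        proof (cases "\<alpha> < \<eta>")
          case True
          then have "\<bar>f \<alpha> - f 0\<bar> < e / 2" using \<eta>f[of \<alpha>] \<alpha> by (simp add: dist_real_def)
          then have "\<bar>rr n t \<alpha> * (f \<alpha> - f 0)\<bar> \<le> e / 2 * rr n t \<alpha>"
            using r0 mult_left_mono[of "\<bar>f \<alpha> - f 0\<bar>" "e/2" "rr n t \<alpha>"]
            by (simp add: abs_mult mult.commute)
          then show ?thesis using B1 P2 by (smt (verit) divide_pos_pos)
        next
          case False
          have ru: "rr n t \<alpha> \<le> 1 / P2" unfolding P2_def using rr_upper[OF tn \<eta>] False by simp
          have "\<bar>rr n t \<alpha> * (f \<alpha> - f 0)\<bar> = rr n t \<alpha> * \<bar>f \<alpha> - f 0\<bar>" using r0 by (simp add: abs_mult)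
          also have "\<dots> \<le> (1 / P2) * (2 * B1)" using ru fd r0 P2 by (intro mult_mono) auto
          finally have h: "\<bar>rr n t \<alpha> * (f \<alpha> - f 0)\<bar> \<le> 2 * B1 / P2" by simp
          have "0 \<le> e / 2 * rr n t \<alpha>" using e r0 by simp
          then show ?thesis using h by linarith
        qed
      qed
      also have "\<dots> = e / 2 * I + 2 * B1 / P2"
        unfolding I_def
        using PI_add[OF bm_mult[OF bm_const rbm] bm_const, of "e/2" "2 * B1 / P2"]
          PI_cmult[of "e/2" "rr n t"] PI_cmult[of "2 * B1 / P2" "\<lambda>_. 1"] PI_one by simp
      finally show ?thesis using eq by simp
    qed
    have P12: "P1 / P2 = K0 * Q (n - t)"
    proof -
      have "P1 = K0 * pochhammer (a + of_nat t) (n - t)"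
        unfolding P1_def K0_def using pochhammer_product'[of "a+1" "t-1" "n-t"] t tn
        by (simp add: of_nat_diff algebra_simps)
      then show ?thesis unfolding Q_def P2_def by simp
    qed
    have "\<bar>PI (\<lambda>\<alpha>. rr n t \<alpha> * f \<alpha>) - f 0 * I\<bar> / I \<le> (e / 2 * I + 2 * B1 / P2) / I"
      using JI Ipos by (intro divide_right_mono) auto
    also have "\<dots> = e / 2 + 2 * B1 / (P2 * I)" using Ipos by (simp add: field_simps)
    also have "\<dots> \<le> e / 2 + 2 * B1 / (P2 * (C / P1))"
      using IC P2 Cpos P1 B1 Ipos by (intro add_left_mono divide_left_mono mult_left_mono) auto
    also have "\<dots> = e / 2 + 2 * B1 * K0 * Q (n - t) / C"
      using P1 P2 Cpos P12 by (simp add: field_simps)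
    also have "\<dots> < e / 2 + e / 2"
    proof -
      have "Q (n - t) < e * C / (4 * B1 * K0)" using M0[OF nt] by simp
      then have "2 * B1 * K0 * Q (n - t) < 2 * B1 * K0 * (e * C / (4 * B1 * K0))"
        using B1 K0 by (intro mult_strict_left_mono) auto
      also have "\<dots> = e * C / 2" using B1 K0 by (simp add: field_simps)
      finally show ?thesis using Cpos by (simp add: field_simps)
    qed
    finally have lt: "\<bar>PI (\<lambda>\<alpha>. rr n t \<alpha> * f \<alpha>) - f 0 * I\<bar> / I < e" by simp
    then show "norm (\<bar>PI (\<lambda>\<alpha>. rr n t \<alpha> * f \<alpha>) - f 0 * PI (rr n t)\<bar> / PI (rr n t) - 0) < e"
      using Ipos unfolding I_def by simp
  qed
qed

end


lemma key:
  fixes c I J :: "nat \<Rightarrow> real"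
  assumes fin: "finite S" and tS: "t \<in> S"
    and nn: "\<And>s. s \<in> S \<Longrightarrow> 0 \<le> c s \<and> 0 \<le> I s"
    and JB: "\<And>s. s \<in> S \<Longrightarrow> \<bar>J s - f0 * I s\<bar> \<le> 2 * B * I s"
    and f0: "\<bar>f0\<bar> \<le> B"
  shows "\<bar>(\<Sum>s\<in>S. c s * J s) / (\<Sum>s\<in>S. c s * I s) - f0\<bar>
     \<le> \<bar>J t - f0 * I t\<bar> / I t + 2 * B * \<bar>c t * I t / (\<Sum>s\<in>S. c s * I s) - 1\<bar>"
proof -
  define E where "E = (\<Sum>s\<in>S. c s * I s)"
  define D where "D = \<bar>J t - f0 * I t\<bar> / I t"
  have E0: "0 \<le> E" unfolding E_def using nn by (intro sum_nonneg) auto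
  have D0: "0 \<le> D" unfolding D_def using nn[OF tS] by auto
  have B0: "0 \<le> B" using f0 by linarith
  show ?thesis
  proof (cases "E = 0")
    case True
    then show ?thesis using f0 B0 D0 unfolding E_def[symmetric] D_def[symmetric] by simp
  next
    case False
    then have Ep: "0 < E" using E0 by simp
    have ctE: "c t * I t \<le> E" unfolding E_def
      using nn by (intro member_le_sum[OF tS _ fin]) auto
    have ct0: "0 \<le> c t * I t" using nn[OF tS] by simp
    have num: "(\<Sum>s\<in>S. c s * J s) - f0 * E = (\<Sum>s\<in>S. c s * (J s - f0 * I s))"
      unfolding E_def by (simp add: sum_distrib_left sum_subtractf algebra_simps)
    have "\<bar>\<Sum>s\<in>S. c s * (J s - f0 * I s)\<bar> \<le> (\<Sum>s\<in>S. \<bar>c s * (J s - f0 * I s)\<bar>)" by (rule sum_abs)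
    also have "\<dots> = \<bar>c t * (J t - f0 * I t)\<bar> + (\<Sum>s\<in>S - {t}. \<bar>c s * (J s - f0 * I s)\<bar>)"
      by (rule sum.remove[OF fin tS])
    also have "\<dots> \<le> c t * I t * D + (\<Sum>s\<in>S - {t}. 2 * B * (c s * I s))"
    proof (rule add_mono)
      have "\<bar>J t - f0 * I t\<bar> \<le> I t * D"
      proof (cases "I t = 0")
        case True then show ?thesis using JB[OF tS] by simp
      next
        case False then show ?thesis unfolding D_def by simp
      qed
      then show "\<bar>c t * (J t - f0 * I t)\<bar> \<le> c t * I t * D"
        using nn[OF tS] by (simp add: abs_mult mult.assoc mult_left_mono)
      show "(\<Sum>s\<in>S - {t}. \<bar>c s * (J s - f0 * I s)\<bar>) \<le> (\<Sum>s\<in>S - {t}. 2 * B * (c s * I s))"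
      proof (rule sum_mono)
        fix s assume "s \<in> S - {t}"
        then have s: "s \<in> S" by simp
        have "\<bar>c s * (J s - f0 * I s)\<bar> = c s * \<bar>J s - f0 * I s\<bar>" using nn[OF s] by (simp add: abs_mult)
        also have "\<dots> \<le> c s * (2 * B * I s)" using nn[OF s] JB[OF s] by (simp add: mult_left_mono)
        finally show "\<bar>c s * (J s - f0 * I s)\<bar> \<le> 2 * B * (c s * I s)" by (simp add: algebra_simps)
      qed
    qed
    also have "\<dots> = c t * I t * D + 2 * B * (E - c t * I t)"
      unfolding E_def by (simp add: sum_distrib_left sum.remove[OF fin tS])
    finally have bnd: "\<bar>(\<Sum>s\<in>S. c s * J s) - f0 * E\<bar> \<le> c t * I t * D + 2 * B * (E - c t * I t)"
      unfolding num .
    define p where "p = c t * I t / E"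
    have p01: "0 \<le> p" "p \<le> 1" unfolding p_def using ctE ct0 Ep by auto
    have "\<bar>(\<Sum>s\<in>S. c s * J s) / E - f0\<bar> = \<bar>(\<Sum>s\<in>S. c s * J s) - f0 * E\<bar> / E"
      using Ep by (simp add: field_simps)
    also have "\<dots> \<le> (c t * I t * D + 2 * B * (E - c t * I t)) / E"
      using bnd Ep by (intro divide_right_mono) auto
    also have "\<dots> = p * D + 2 * B * (1 - p)" unfolding p_def using Ep by (simp add: field_simps)
    also have "\<dots> \<le> D + 2 * B * \<bar>p - 1\<bar>"
      using p01 D0 B0 mult_right_mono[of p 1 D] by (simp add: abs_if)
    finally show ?thesis unfolding E_def[symmetric] D_def[symmetric] p_def .
  qed
qed


definition ccf :: "('a \<Rightarrow> 'b \<Rightarrow> real) \<Rightarrow> 'b measure \<Rightarrow> ('b \<Rightarrow> real)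
    \<Rightarrow> nat \<Rightarrow> (nat \<Rightarrow> 'a) \<Rightarrow> nat \<Rightarrow> real" where
  "ccf k mu q0 n x s = (\<Sum>A\<in>tau s n. \<Prod>B\<in>A. fact (card B - 1) * marg k mu q0 x B)"

lemma likK_eq: "likK k mu q0 n x s \<alpha> = ccf k mu q0 n x s * rr n s \<alpha>"
  unfolding likK_def ccf_def rr_def by simp

lemma lik_eq: "lik k mu q0 n x = (\<lambda>\<alpha>. \<Sum>s=1..n. ccf k mu q0 n x s * rr n s \<alpha>)"
  unfolding lik_def likK_eq by simp

lemma marg_meas:
  assumes mu: "sigma_finite_measure mu"
    and k_meas: "(\<lambda>(x, th). k x th) \<in> borel_measurable (nu \<Otimes>\<^sub>M mu)"
    and q0_meas[measurable]: "q0 \<in> borel_measurable mu"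
    and X_meas: "\<And>i. X i \<in> measurable M nu"
  shows "(\<lambda>\<omega>. marg k mu q0 (\<lambda>i. X i \<omega>) B) \<in> borel_measurable M"
proof -
  have ki[measurable]: "(\<lambda>z. k (X i (fst z)) (snd z)) \<in> borel_measurable (M \<Otimes>\<^sub>M mu)" for i
  proof -
    have m: "(\<lambda>z. (X i (fst z), snd z)) \<in> measurable (M \<Otimes>\<^sub>M mu) (nu \<Otimes>\<^sub>M mu)"
      using X_meas[of i] by measurable
    show ?thesis using measurable_compose[OF m k_meas] by simp
  qed
  have "(\<lambda>z. (\<Prod>i\<in>B. k (X i (fst z)) (snd z)) * q0 (snd z)) \<in> borel_measurable (M \<Otimes>\<^sub>M mu)"
    by measurable
  then have "(\<lambda>(\<omega>, th). (\<Prod>i\<in>B. k (X i \<omega>) th) * q0 th) \<in> borel_measurable (M \<Otimes>\<^sub>M mu)"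
    by (simp add: case_prod_beta')
  then show ?thesis unfolding marg_def
    by (rule sigma_finite_measure.borel_measurable_lebesgue_integral[OF mu])
qed

lemma ccf_meas:
  assumes mu: "sigma_finite_measure mu"
    and k_meas: "(\<lambda>(x, th). k x th) \<in> borel_measurable (nu \<Otimes>\<^sub>M mu)"
    and q0_meas: "q0 \<in> borel_measurable mu"
    and X_meas: "\<And>i. X i \<in> measurable M nu"
  shows "(\<lambda>\<omega>. ccf k mu q0 n (\<lambda>i. X i \<omega>) s) \<in> borel_measurable M"
proof -
  note [measurable] = marg_meas[OF mu k_meas q0_meas X_meas]
  show ?thesis unfolding ccf_def by measurable
qed

lemma ccf_nonneg:
  assumes k_nonneg: "\<And>x th. x \<in> space nu \<Longrightarrow> th \<in> space mu \<Longrightarrow> 0 \<le> k x th"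
    and q0_nonneg: "\<And>th. th \<in> space mu \<Longrightarrow> 0 \<le> q0 th"
    and x: "\<And>i. x i \<in> space nu"
  shows "0 \<le> ccf k mu q0 n x s"
proof -
  have "0 \<le> marg k mu q0 x B" for B
    unfolding marg_def
    by (rule integral_nonneg_AE, rule AE_I2)
       (auto intro!: mult_nonneg_nonneg prod_nonneg k_nonneg q0_nonneg x)
  then show ?thesis unfolding ccf_def by (auto intro!: sum_nonneg prod_nonneg)
qed

context prisetup begin

lemma L1: "(LINT \<alpha>:{0<..}|lborel. pri \<alpha> * likK k mu q0 n x s \<alpha>) = ccf k mu q0 n x s * PI (rr n s)"
  unfolding likK_eq PI_set PI_cmult[symmetric] ..

lemma ev_eq: "evidence pri k mu q0 n x = (\<Sum>s=1..n. ccf k mu q0 n x s * PI (rr n s))"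
proof -
  have "evidence pri k mu q0 n x = PI (\<lambda>\<alpha>. \<Sum>s=1..n. ccf k mu q0 n x s * rr n s \<alpha>)"
    unfolding evidence_def lik_eq PI_set ..
  also have "\<dots> = (\<Sum>s=1..n. PI (\<lambda>\<alpha>. ccf k mu q0 n x s * rr n s \<alpha>))"
    by (rule PI_sum) (auto intro!: bm_mult bm_rr)
  finally show ?thesis by (simp add: PI_cmult)
qed

lemma pk_eq: "postK pri k mu q0 n x t = ccf k mu q0 n x t * PI (rr n t) / evidence pri k mu q0 n x"
  unfolding postK_def L1 ..

lemma int_eq:
  fixes f :: "real \<Rightarrow> real"
  assumes fc: "continuous_on UNIV f" and fB: "\<And>x. \<bar>f x\<bar> \<le> B"
    and cc0: "\<And>s. 0 \<le> ccf k mu q0 n x s"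
  shows "(\<integral>\<alpha>. f \<alpha> \<partial>post_alpha pri k mu q0 n x) =
     (\<Sum>s=1..n. ccf k mu q0 n x s * PI (\<lambda>\<alpha>. rr n s \<alpha> * f \<alpha>)) / evidence pri k mu q0 n x"
proof -
  define E where "E = evidence pri k mu q0 n x"
  have E0: "0 \<le> E" unfolding E_def ev_eq
    by (intro sum_nonneg mult_nonneg_nonneg cc0 PI_nonneg rr_nonneg)
  define g where "g \<alpha> = indicator {0<..} \<alpha> * pri \<alpha> * lik k mu q0 n x \<alpha> / E" for \<alpha>
  have fm[measurable]: "f \<in> borel_measurable borel" using fc by (rule borel_measurable_continuous_onI)
  have gm: "g \<in> borel_measurable lborel" unfolding g_def lik_eq by simp
  have g0: "0 \<le> g \<alpha>" for \<alpha>
    unfolding g_def lik_eq using E0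
    by (cases "0 < \<alpha>") (auto intro!: divide_nonneg_nonneg mult_nonneg_nonneg sum_nonneg cc0 pri_nonneg rr_nonneg)
  have "(\<integral>\<alpha>. f \<alpha> \<partial>post_alpha pri k mu q0 n x) = (\<integral>\<alpha>. g \<alpha> *\<^sub>R f \<alpha> \<partial>lborel)"
    unfolding post_alpha_def g_def[symmetric] E_def[symmetric]
    by (rule integral_density) (use gm g0 in auto)
  also have "\<dots> = (\<integral>\<alpha>. indicator {0<..} \<alpha> * (pri \<alpha> * (\<Sum>s=1..n. ccf k mu q0 n x s * (rr n s \<alpha> * f \<alpha>))) / E \<partial>lborel)"
  proof -
    have "g \<alpha> *\<^sub>R f \<alpha> = indicator {0<..} \<alpha> * (pri \<alpha> * (\<Sum>s=1..n. ccf k mu q0 n x s * (rr n s \<alpha> * f \<alpha>))) / E" for \<alpha>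
      unfolding g_def lik_eq by (simp add: sum_distrib_left sum_distrib_right mult_ac)
    then show ?thesis by simp
  qed
  also have "\<dots> = PI (\<lambda>\<alpha>. \<Sum>s=1..n. ccf k mu q0 n x s * (rr n s \<alpha> * f \<alpha>)) / E"
    unfolding PI_def by simp
  also have "\<dots> = (\<Sum>s=1..n. ccf k mu q0 n x s * PI (\<lambda>\<alpha>. rr n s \<alpha> * f \<alpha>)) / E"
    by (subst PI_sum) (auto intro!: bm_mult bm_rr bm_cont[OF fc fB] simp: PI_cmult)
  finally show ?thesis unfolding E_def .
qed

lemma J_bound:
  fixes f :: "real \<Rightarrow> real"
  assumes fc: "continuous_on UNIV f" and fB: "\<And>x. \<bar>f x\<bar> \<le> B" and s: "1 \<le> s" "s \<le> n"
  shows "\<bar>PI (\<lambda>\<alpha>. rr n s \<alpha> * f \<alpha>) - f 0 * PI (rr n s)\<bar> \<le> 2 * B * PI (rr n s)"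
proof -
  have rbm: "bm (rr n s)" using s by (rule bm_rr)
  have fbm: "bm f" using fc fB by (rule bm_cont)
  have b1: "bm (\<lambda>\<alpha>. rr n s \<alpha> * f \<alpha>)" by (rule bm_mult[OF rbm fbm])
  have b2: "bm (\<lambda>\<alpha>. rr n s \<alpha> * (f \<alpha> - f 0))"
    using bm_mult[OF rbm bm_add[OF fbm bm_const[of "- f 0"]]] by simp
  have "PI (\<lambda>\<alpha>. rr n s \<alpha> * f \<alpha>) - f 0 * PI (rr n s) = PI (\<lambda>\<alpha>. rr n s \<alpha> * f \<alpha> - f 0 * rr n s \<alpha>)"
    by (subst PI_diff[OF b1 bm_mult[OF bm_const rbm]]) (simp add: PI_cmult)
  also have "\<dots> = PI (\<lambda>\<alpha>. rr n s \<alpha> * (f \<alpha> - f 0))" by (simp add: algebra_simps)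
  finally have eq: "PI (\<lambda>\<alpha>. rr n s \<alpha> * f \<alpha>) - f 0 * PI (rr n s) = PI (\<lambda>\<alpha>. rr n s \<alpha> * (f \<alpha> - f 0))" .
  have "\<bar>PI (\<lambda>\<alpha>. rr n s \<alpha> * (f \<alpha> - f 0))\<bar> \<le> PI (\<lambda>\<alpha>. \<bar>rr n s \<alpha> * (f \<alpha> - f 0)\<bar>)"
    by (rule PI_abs[OF b2])
  also have "\<dots> \<le> PI (\<lambda>\<alpha>. (2 * B) * rr n s \<alpha>)"
  proof (rule PI_mono)
    show "bm (\<lambda>\<alpha>. \<bar>rr n s \<alpha> * (f \<alpha> - f 0)\<bar>)" using b2 unfolding bm_def by auto
    show "bm (\<lambda>\<alpha>. 2 * B * rr n s \<alpha>)" by (intro bm_mult bm_const rbm)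
    fix \<alpha> :: real assume \<alpha>: "0 < \<alpha>"
    have r0: "0 \<le> rr n s \<alpha>" by (rule rr_nonneg[OF \<alpha>])
    have fd: "\<bar>f \<alpha> - f 0\<bar> \<le> 2 * B" using fB[of \<alpha>] fB[of 0] by linarith
    show "\<bar>rr n s \<alpha> * (f \<alpha> - f 0)\<bar> \<le> 2 * B * rr n s \<alpha>"
      using mult_left_mono[OF fd r0] r0 by (simp add: abs_mult mult.commute)
  qed
  also have "\<dots> = 2 * B * PI (rr n s)" by (rule PI_cmult)
  finally show ?thesis using eq by simp
qed

end


theorem proposition2:
  fixes M :: "'w measure" and X :: "nat \<Rightarrow> 'w \<Rightarrow> 'a"
    and nu :: "'a measure" and mu :: "'b measure"
    and k :: "'a \<Rightarrow> 'b \<Rightarrow> real" and q0 :: "'b \<Rightarrow> real"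
    and pri :: "real \<Rightarrow> real"
    and t :: nat and p :: "nat \<Rightarrow> real" and R :: "nat \<Rightarrow> 'a measure"
  assumes
    \<comment> \<open>kernel density k(.|th) w.r.t. a sigma-finite measure nu on the data space\<close>
    nu: "sigma_finite_measure nu"
    and mu: "sigma_finite_measure mu"
    and k_meas: "(\<lambda>(x, th). k x th) \<in> borel_measurable (nu \<Otimes>\<^sub>M mu)"
    and k_nonneg: "\<And>x th. x \<in> space nu \<Longrightarrow> th \<in> space mu \<Longrightarrow> 0 \<le> k x th"
    and k_dens: "\<And>th. th \<in> space mu \<Longrightarrow> (\<integral>\<^sup>+ x. ennreal (k x th) \<partial>nu) = 1"
    \<comment> \<open>base probability measure Q0 with density q0 w.r.t. mu\<close>
    and q0_meas: "q0 \<in> borel_measurable mu"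
    and q0_nonneg: "\<And>th. th \<in> space mu \<Longrightarrow> 0 \<le> q0 th"
    and q0_dens: "(\<integral>\<^sup>+ th. ennreal (q0 th) \<partial>mu) = 1"
    \<comment> \<open>(A1): prior on alpha in (0,oo) with a Lebesgue density\<close>
    and pri_meas: "pri \<in> borel_measurable borel"
    and pri_nonneg: "\<And>\<alpha>. 0 < \<alpha> \<Longrightarrow> 0 \<le> pri \<alpha>"
    and pri_int: "set_integrable lborel {0<..} pri"
    and pri_one: "(LINT \<alpha>:{0<..}|lborel. pri \<alpha>) = 1"
    \<comment> \<open>(A2)\<close>
    and A2: "\<exists>\<epsilon> \<delta> \<beta>::real. 0 < \<epsilon> \<and> 0 < \<delta> \<and>
               (\<forall>\<alpha>\<in>{0<..<\<epsilon>}. \<alpha> powr \<beta> / \<delta> \<le> pri \<alpha> \<and> pri \<alpha> \<le> \<delta> * \<alpha> powr \<beta>)"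
    \<comment> \<open>finite mixture P = sum_j p_j R_j with distinct components\<close>
    and t_pos: "1 \<le> t"
    and R_prob: "\<And>j. j < t \<Longrightarrow> prob_space (R j)"
    and R_sets: "\<And>j. j < t \<Longrightarrow> sets (R j) = sets nu"
    and R_distinct: "inj_on R {..<t}"
    and p_range: "\<And>j. j < t \<Longrightarrow> 0 < p j \<and> p j < 1"
    and p_sum: "(\<Sum>j<t. p j) = 1"
    \<comment> \<open>X_1, X_2, ... i.i.d. from P under the probability measure M (= P^(oo))\<close>
    and M: "prob_space M"
    and X_meas: "\<And>i. X i \<in> measurable M nu"
    and X_indep: "prob_space.indep_vars M (\<lambda>_. nu) X UNIV"
    and X_distr: "\<And>i. distr M nu (X i) = mixture nu t p R"
    \<comment> \<open>pr(K_n = t | X_{1:n}) -> 1 in probability\<close>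
    and hyp: "tendsto_in_prob M (\<lambda>n \<omega>. postK pri k mu q0 n (\<lambda>i. X i \<omega>) t) 1"
  shows "weak_conv_delta0_in_prob M (\<lambda>n \<omega>. post_alpha pri k mu q0 n (\<lambda>i. X i \<omega>))"
proof -
  interpret P: prisetup pri using pri_meas pri_nonneg pri_int pri_one by unfold_locales
  interpret Mp: prob_space M by (rule M)
  obtain \<epsilon>0 \<delta> \<beta> :: real where e0: "0 < \<epsilon>0" and d0: "0 < \<delta>"
    and A2': "\<forall>\<alpha>\<in>{0<..<\<epsilon>0}. \<alpha> powr \<beta> / \<delta> \<le> pri \<alpha>"
    using A2 by blast
  have ccm[measurable]: "\<And>n s. (\<lambda>\<omega>. ccf k mu q0 n (\<lambda>i. X i \<omega>) s) \<in> borel_measurable M"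
    by (rule ccf_meas[OF mu k_meas q0_meas X_meas])
  have ccn: "0 \<le> ccf k mu q0 n (\<lambda>i. X i \<omega>) s" if "\<omega> \<in> space M" for n s \<omega>
  proof -
    have xs: "\<And>i. X i \<omega> \<in> space nu" using measurable_space[OF X_meas that] .
    show ?thesis using ccf_nonneg[of nu mu k q0 "\<lambda>i. X i \<omega>" n s] k_nonneg q0_nonneg xs by blast
  qed
  show ?thesis unfolding weak_conv_delta0_in_prob_def tendsto_in_prob_def
  proof (intro allI impI)
    fix f :: "real \<Rightarrow> real" and e :: real
    assume fa: "continuous_on UNIV f \<and> bounded (range f)" and e: "0 < e"
    then have fc: "continuous_on UNIV f" by simp
    obtain B where B: "\<And>x. \<bar>f x\<bar> \<le> B" using fa unfolding bounded_iff by auto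
    define B1 where "B1 = \<bar>B\<bar> + 1"
    have B1: "0 < B1" unfolding B1_def by simp
    have fB: "\<bar>f x\<bar> \<le> B1" for x using B[of x] abs_ge_self[of B] unfolding B1_def by linarith
    define Dn where "Dn n = \<bar>P.PI (\<lambda>\<alpha>. rr n t \<alpha> * f \<alpha>) - f 0 * P.PI (rr n t)\<bar> / P.PI (rr n t)" for n
    have "Dn \<longlonglongrightarrow> 0" unfolding Dn_def[abs_def]
      by (rule P.det[OF e0 d0 A2' fc fB B1 t_pos])
    then obtain N1 where N1: "\<And>n. n \<ge> N1 \<Longrightarrow> norm (Dn n - 0) < e / 2"
      using LIMSEQ_D[of Dn 0 "e/2"] e by auto
    define bad where "bad n = {\<omega>\<in>space M. e / (4 * B1) < \<bar>postK pri k mu q0 n (\<lambda>i. X i \<omega>) t - 1\<bar>}" for n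
    have badlim: "(\<lambda>n. measure M (bad n)) \<longlonglongrightarrow> 0"
      using hyp e B1 unfolding tendsto_in_prob_def bad_def by auto
    have badm: "bad n \<in> sets M" for n
    proof -
      have "bad n = {\<omega>\<in>space M. e / (4 * B1) < \<bar>ccf k mu q0 n (\<lambda>i. X i \<omega>) t * P.PI (rr n t) /
          (\<Sum>s=1..n. ccf k mu q0 n (\<lambda>i. X i \<omega>) s * P.PI (rr n s)) - 1\<bar>}"
        unfolding bad_def P.pk_eq P.ev_eq ..
      also have "\<dots> \<in> sets M" by measurable
      finally show ?thesis .
    qed
    define A where "A n = {\<omega>\<in>space M. e < \<bar>(\<integral>\<alpha>. f \<alpha> \<partial>post_alpha pri k mu q0 n (\<lambda>i. X i \<omega>)) - f 0\<bar>}" for n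
    have sub: "A n \<subseteq> bad n" if n: "n \<ge> max N1 t" for n
    proof
      fix \<omega> assume "\<omega> \<in> A n"
      then have \<omega>: "\<omega> \<in> space M" and big: "e < \<bar>(\<integral>\<alpha>. f \<alpha> \<partial>post_alpha pri k mu q0 n (\<lambda>i. X i \<omega>)) - f 0\<bar>"
        unfolding A_def by auto
      define x where "x = (\<lambda>i. X i \<omega>)"
      have Dl: "Dn n < e / 2" using N1[of n] n by simp
      have tS: "t \<in> {1..n}" using n t_pos by auto
      have kk: "\<bar>(\<Sum>s\<in>{1..n}. ccf k mu q0 n x s * P.PI (\<lambda>\<alpha>. rr n s \<alpha> * f \<alpha>)) / (\<Sum>s\<in>{1..n}. ccf k mu q0 n x s * P.PI (rr n s)) - f 0\<bar>
         \<le> \<bar>P.PI (\<lambda>\<alpha>. rr n t \<alpha> * f \<alpha>) - f 0 * P.PI (rr n t)\<bar> / P.PI (rr n t)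
           + 2 * B1 * \<bar>ccf k mu q0 n x t * P.PI (rr n t) / (\<Sum>s\<in>{1..n}. ccf k mu q0 n x s * P.PI (rr n s)) - 1\<bar>"
      proof (rule key[OF finite_atLeastAtMost tS])
        fix s assume s: "s \<in> {1..n}"
        show "0 \<le> ccf k mu q0 n x s \<and> 0 \<le> P.PI (rr n s)"
          unfolding x_def using ccn[OF \<omega>] by (auto intro!: P.PI_nonneg rr_nonneg)
        show "\<bar>P.PI (\<lambda>\<alpha>. rr n s \<alpha> * f \<alpha>) - f 0 * P.PI (rr n s)\<bar> \<le> 2 * B1 * P.PI (rr n s)"
          using s by (intro P.J_bound[OF fc fB]) auto
      next
        show "\<bar>f 0\<bar> \<le> B1" by (rule fB)
      qed
      have ie: "(\<integral>\<alpha>. f \<alpha> \<partial>post_alpha pri k mu q0 n x) = (\<Sum>s=1..n. ccf k mu q0 n x s * P.PI (\<lambda>\<alpha>. rr n s \<alpha> * f \<alpha>)) / evidence pri k mu q0 n x"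
        by (rule P.int_eq[OF fc fB]) (use ccn[OF \<omega>] in \<open>simp add: x_def\<close>)
      have le: "\<bar>(\<integral>\<alpha>. f \<alpha> \<partial>post_alpha pri k mu q0 n x) - f 0\<bar> \<le> Dn n + 2 * B1 * \<bar>postK pri k mu q0 n x t - 1\<bar>"
        using kk by (simp only: ie P.pk_eq P.ev_eq Dn_def)
      have big': "e < \<bar>(\<integral>\<alpha>. f \<alpha> \<partial>post_alpha pri k mu q0 n x) - f 0\<bar>" using big by (simp only: x_def)
      have "e < Dn n + 2 * B1 * \<bar>postK pri k mu q0 n x t - 1\<bar>" using big' le by linarith
      then have "e / 2 < 2 * B1 * \<bar>postK pri k mu q0 n x t - 1\<bar>" using Dl by linarith
      then have "e / (4 * B1) < \<bar>postK pri k mu q0 n x t - 1\<bar>"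
        using B1 by (simp add: field_simps)
      then show "\<omega> \<in> bad n" unfolding bad_def x_def using \<omega> by auto
    qed
    show "(\<lambda>n. measure M {\<omega> \<in> space M. e < \<bar>(\<integral>\<alpha>. f \<alpha> \<partial>post_alpha pri k mu q0 n (\<lambda>i. X i \<omega>)) - f 0\<bar>}) \<longlonglongrightarrow> 0"
      unfolding A_def[symmetric]
    proof (rule tendsto_sandwich[OF _ _ tendsto_const badlim])
      show "\<forall>\<^sub>F n in sequentially. 0 \<le> measure M (A n)" by simp
      show "\<forall>\<^sub>F n in sequentially. measure M (A n) \<le> measure M (bad n)"
        using eventually_ge_at_top[of "max N1 t"]
        by eventually_elim (rule Mp.finite_measure_mono[OF sub badm])
    qed
  qed
qed


end
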